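(* Let $r,s\ge2$ be integers satisfying $r\ge3$ if $s=2$, $r\ge2$ if $s\in\{3,4\}$, and $r\ge s-1$ if $s\ge5$. Let \[ \alpha_0=\frac{1}{r(s-1)},\qquad \beta_0=\frac{rs-r-s}{r(s-1)}. \] Then $(\alpha_0,\beta_0)$ is a local maximiser of $\varphi$ on $K$, and the Hessian of $\varphi$ at $(\alpha_0,\beta_0)$ is strictly negative definite.
   Context: Let $g(x)=x\log x$ for $x>0$, with $g(0)=0$. Let \[ K=\{(\alpha,\beta)\in\mathbb R^2:\alpha,\beta\ge0,\ (s-1)\alpha+\beta\le1\}. \] Define $\varphi:K\to\mathbb R$ by \begin{align*} \varphi(\alpha,\beta)&=(\alpha+\beta)\log(r-1)+g(\alpha+\beta)+g(r-1-\alpha-\beta)-\tfrac{2}{s-1}g(\beta)-g(\alpha)\\ &\quad-\tfrac{1}{s(s-1)}g(rs-r-s-s\beta)-\tfrac{1}{s-1}g(1-(s-1)\alpha-\beta). \end{align*} *)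

theory Defs
  imports "HOL-Analysis.Analysis"
begin

text \<open>g(x) = x log x for x > 0, g(0) = 0 (values at x < 0 are never used on K).\<close>
definition g :: "real \<Rightarrow> real" where
  "g x = (if x = 0 then 0 else x * ln x)"

definition K :: "nat \<Rightarrow> (real \<times> real) set" where
  "K s = {(a, b). a \<ge> 0 \<and> b \<ge> 0 \<and> (real s - 1) * a + b \<le> 1}"

definition phi :: "nat \<Rightarrow> nat \<Rightarrow> real \<Rightarrow> real \<Rightarrow> real" where
  "phi r s a b =
     (a + b) * ln (real r - 1) + g (a + b) + g (real r - 1 - a - b)
     - 2 / (real s - 1) * g b - g a
     - 1 / (real s * (real s - 1)) * g (real r * real s - real r - real s - real s * b)
     - 1 / (real s - 1) * g (1 - (real s - 1) * a - b)"

definition phi_aa :: "nat \<Rightarrow> nat \<Rightarrow> real \<Rightarrow> real \<Rightarrow> real" where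
  "phi_aa r s a b = deriv (\<lambda>x. deriv (\<lambda>y. phi r s y b) x) a"

definition phi_ab :: "nat \<Rightarrow> nat \<Rightarrow> real \<Rightarrow> real \<Rightarrow> real" where
  "phi_ab r s a b = deriv (\<lambda>y. deriv (\<lambda>x. phi r s x y) a) b"

definition phi_ba :: "nat \<Rightarrow> nat \<Rightarrow> real \<Rightarrow> real \<Rightarrow> real" where
  "phi_ba r s a b = deriv (\<lambda>x. deriv (\<lambda>y. phi r s x y) b) a"

definition phi_bb :: "nat \<Rightarrow> nat \<Rightarrow> real \<Rightarrow> real \<Rightarrow> real" where
  "phi_bb r s a b = deriv (\<lambda>y. deriv (\<lambda>z. phi r s a z) y) b"

definition hessian_neg_def :: "nat \<Rightarrow> nat \<Rightarrow> real \<Rightarrow> real \<Rightarrow> bool" where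
  "hessian_neg_def r s a b \<longleftrightarrow>
     (\<forall>u v. (u, v) \<noteq> (0, 0) \<longrightarrow>
        u * u * phi_aa r s a b + u * v * phi_ab r s a b
        + v * u * phi_ba r s a b + v * v * phi_bb r s a b < 0)"

definition local_max_on :: "(real \<times> real \<Rightarrow> real) \<Rightarrow> (real \<times> real) set \<Rightarrow> real \<times> real \<Rightarrow> bool" where
  "local_max_on f S p \<longleftrightarrow> p \<in> S \<and>
     (\<exists>e>0. \<forall>q\<in>S. dist q p < e \<longrightarrow> f q \<le> f p)"

end

theory Submission
  imports Defs
begin


lemma xlnx_taylor:
  fixes y y0 :: real
  assumes "y0 > 0" "y > 0"
  shows "\<exists>t. min y y0 \<le> t \<and> t \<le> max y y0 \<and> t > 0 \<and>
     y * ln y = y0 * ln y0 + (ln y0 + 1) * (y - y0) + (y - y0)^2 / (2 * t)"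
proof (cases "y = y0")
  case True
  then show ?thesis using assms by (intro exI[of _ y0]) auto
next
  case False
  define diff :: "nat \<Rightarrow> real \<Rightarrow> real" where
    "diff = (\<lambda>m. if m = 0 then (\<lambda>x. x * ln x) else if m = 1 then (\<lambda>x. ln x + 1) else (\<lambda>x. 1 / x))"
  have D: "\<forall>m t. m < 2 \<and> min y y0 \<le> t \<and> t \<le> max y y0 \<longrightarrow> DERIV (diff m) t :> diff (Suc m) t"
  proof (intro allI impI)
    fix m t assume h: "m < (2::nat) \<and> min y y0 \<le> t \<and> t \<le> max y y0"
    then have tp: "t > 0" using assms by linarith
    show "DERIV (diff m) t :> diff (Suc m) t"
    proof (cases "m = 0")
      case True
      then show ?thesis using tp unfolding diff_def
        by (auto intro!: derivative_eq_intros)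
    next
      case False
      then have "m = 1" using h by auto
      then show ?thesis using tp unfolding diff_def
        by (auto intro!: derivative_eq_intros simp: field_simps)
    qed
  qed
  obtain t where t: "(if y < y0 then y < t \<and> t < y0 else y0 < t \<and> t < y)"
    "y * ln y = (\<Sum>m<2. (diff m y0 / fact m) * (y - y0)^m) + (diff 2 t / fact 2) * (y - y0)^2"
    using Taylor[of 2 diff "\<lambda>x. x * ln x" "min y y0" "max y y0" y0 y, OF _ _ D] False
    by (auto simp: diff_def)
  have tb: "min y y0 \<le> t \<and> t \<le> max y y0 \<and> t > 0" using t(1) assms by (auto split: if_splits)
  have "y * ln y = y0 * ln y0 + (ln y0 + 1) * (y - y0) + (y - y0)^2 / (2 * t)"
    using t(2) by (simp add: diff_def numeral_2_eq_2 fact_2 field_simps)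
  then show ?thesis using tb by blast
qed



lemma g_eq: "g x = x * ln x" by (simp add: g_def)

definition pos :: "nat \<Rightarrow> nat \<Rightarrow> real \<Rightarrow> real \<Rightarrow> bool" where
  "pos r s x y \<longleftrightarrow> 0 < x \<and> 0 < y \<and> 0 < real r - 1 - x - y \<and>
     0 < real r * real s - real r - real s - real s * y \<and> 0 < 1 - (real s - 1) * x - y"

definition Da :: "nat \<Rightarrow> nat \<Rightarrow> real \<Rightarrow> real \<Rightarrow> real" where
  "Da r s x y = ln (real r - 1) + ln (x + y) - ln (real r - 1 - x - y) - ln x
     + ln (1 - (real s - 1) * x - y)"

definition Db :: "nat \<Rightarrow> nat \<Rightarrow> real \<Rightarrow> real \<Rightarrow> real" where
  "Db r s x y = ln (real r - 1) + ln (x + y) - ln (real r - 1 - x - y) - 2 / (real s - 1) * ln y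
     + 1 / (real s - 1) * ln (real r * real s - real r - real s - real s * y)
     + 1 / (real s - 1) * ln (1 - (real s - 1) * x - y)"

lemma Db_aux:
  fixes S c l d :: real
  assumes "S - 1 \<noteq> 0" "S \<noteq> 0"
  shows "- ((- c - 1) / (S - 1)) - (l * 2 + 2) / (S - 1) - (- (S * d) - S) / (S * (S - 1))
     = d / (S - 1) + (c / (S - 1) - 2 * l / (S - 1))"
proof -
  have e: "(- (S * d) - S) / (S * (S - 1)) = (- d - 1) / (S - 1)"
    using mult_divide_mult_cancel_left[of S "- d - 1" "S - 1"] assms by (simp add: algebra_simps)
  have q: "1 + S * S - S * 2 \<noteq> 0"
  proof
    assume "1 + S * S - S * 2 = 0"
    then have "(S - 1) * (S - 1) = 0" by (simp add: algebra_simps)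
    then show False using assms by simp
  qed
  show ?thesis unfolding e using assms q by (simp add: field_simps)
qed

lemma Da_deriv:
  assumes "s \<ge> 2" "pos r s x y"
  shows "((\<lambda>x. phi r s x y) has_real_derivative Da r s x y) (at x)"
proof -
  have s1: "real s - 1 \<noteq> 0" using assms by auto
  show ?thesis using assms s1 unfolding phi_def g_eq Da_def pos_def
    apply -
    apply (rule derivative_eq_intros refl | simp)+
    apply (simp add: field_simps)
    done
qed

lemma Db_deriv:
  assumes "s \<ge> 2" "pos r s x y"
  shows "((\<lambda>y. phi r s x y) has_real_derivative Db r s x y) (at y)"
proof -
  have s1: "real s - 1 \<noteq> 0" "real s \<noteq> 0" using assms by auto
  show ?thesis using assms s1 unfolding phi_def g_eq Db_def pos_def
    apply -
    apply (rule derivative_eq_intros refl | simp)+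
    using s1 apply (rule Db_aux)
    done
qed

definition Pq :: "nat \<Rightarrow> real \<Rightarrow> real \<Rightarrow> real" where
  "Pq r x y = 1 / (x + y) + 1 / (real r - 1 - x - y)"

definition Daa :: "nat \<Rightarrow> nat \<Rightarrow> real \<Rightarrow> real \<Rightarrow> real" where
  "Daa r s x y = Pq r x y - 1 / x - (real s - 1) / (1 - (real s - 1) * x - y)"

definition Dab :: "nat \<Rightarrow> nat \<Rightarrow> real \<Rightarrow> real \<Rightarrow> real" where
  "Dab r s x y = Pq r x y - 1 / (1 - (real s - 1) * x - y)"

definition Dbb :: "nat \<Rightarrow> nat \<Rightarrow> real \<Rightarrow> real \<Rightarrow> real" where
  "Dbb r s x y = Pq r x y - 2 / ((real s - 1) * y)
     - real s / ((real s - 1) * (real r * real s - real r - real s - real s * y))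
     - 1 / ((real s - 1) * (1 - (real s - 1) * x - y))"

lemma Daa_deriv:
  assumes "s \<ge> 2" "pos r s x y"
  shows "((\<lambda>x. Da r s x y) has_real_derivative Daa r s x y) (at x)"
  using assms unfolding Da_def Daa_def Pq_def pos_def
  apply -
  apply (rule derivative_eq_intros refl | simp)+
  apply (simp_all add: mult.commute divide_simps)?
  done

lemma Dab_deriv:
  assumes "s \<ge> 2" "pos r s x y"
  shows "((\<lambda>y. Da r s x y) has_real_derivative Dab r s x y) (at y)"
  using assms unfolding Da_def Dab_def Pq_def pos_def
  apply -
  apply (rule derivative_eq_intros refl | simp)+
  apply (simp_all add: mult.commute divide_simps)?
  done

lemma Dba_deriv:
  assumes "s \<ge> 2" "pos r s x y"
  shows "((\<lambda>x. Db r s x y) has_real_derivative Dab r s x y) (at x)"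
  using assms unfolding Db_def Dab_def Pq_def pos_def
  apply -
  apply (rule derivative_eq_intros refl | simp)+
  apply (simp_all add: mult.commute divide_simps)?
  done

lemma Dbb_deriv:
  assumes "s \<ge> 2" "pos r s x y"
  shows "((\<lambda>y. Db r s x y) has_real_derivative Dbb r s x y) (at y)"
  using assms unfolding Db_def Dbb_def Pq_def pos_def
  apply -
  apply (rule derivative_eq_intros refl | simp)+
  apply (simp_all add: mult.commute divide_simps)?
  done

lemma open_pos1: "open {x. pos r s x y}"
  unfolding pos_def
  by (intro open_Collect_conj open_Collect_less continuous_intros)

lemma open_pos2: "open {y. pos r s x y}"
  unfolding pos_def
  by (intro open_Collect_conj open_Collect_less continuous_intros)

lemma phi_aa_eq:
  assumes "s \<ge> 2" "pos r s a b"
  shows "phi_aa r s a b = Daa r s a b"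
proof -
  have "((\<lambda>x. deriv (\<lambda>y. phi r s y b) x) has_real_derivative Daa r s a b) (at a)"
    by (rule has_field_derivative_transform_within_open[OF Daa_deriv[OF assms] open_pos1])
       (use assms in \<open>auto intro!: DERIV_imp_deriv[symmetric] Da_deriv\<close>)
  then show ?thesis unfolding phi_aa_def by (rule DERIV_imp_deriv)
qed

lemma phi_ab_eq:
  assumes "s \<ge> 2" "pos r s a b"
  shows "phi_ab r s a b = Dab r s a b"
proof -
  have "((\<lambda>y. deriv (\<lambda>x. phi r s x y) a) has_real_derivative Dab r s a b) (at b)"
    by (rule has_field_derivative_transform_within_open[OF Dab_deriv[OF assms] open_pos2])
       (use assms in \<open>auto intro!: DERIV_imp_deriv[symmetric] Da_deriv\<close>)
  then show ?thesis unfolding phi_ab_def by (rule DERIV_imp_deriv)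
qed

lemma phi_ba_eq:
  assumes "s \<ge> 2" "pos r s a b"
  shows "phi_ba r s a b = Dab r s a b"
proof -
  have "((\<lambda>x. deriv (\<lambda>y. phi r s x y) b) has_real_derivative Dab r s a b) (at a)"
    by (rule has_field_derivative_transform_within_open[OF Dba_deriv[OF assms] open_pos1])
       (use assms in \<open>auto intro!: DERIV_imp_deriv[symmetric] Db_deriv\<close>)
  then show ?thesis unfolding phi_ba_def by (rule DERIV_imp_deriv)
qed

lemma phi_bb_eq:
  assumes "s \<ge> 2" "pos r s a b"
  shows "phi_bb r s a b = Dbb r s a b"
proof -
  have "((\<lambda>y. deriv (\<lambda>z. phi r s a z) y) has_real_derivative Dbb r s a b) (at b)"
    by (rule has_field_derivative_transform_within_open[OF Dbb_deriv[OF assms] open_pos2])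
       (use assms in \<open>auto intro!: DERIV_imp_deriv[symmetric] Db_deriv\<close>)
  then show ?thesis unfolding phi_bb_def by (rule DERIV_imp_deriv)
qed



lemma pos_of_nat_eq: "(E::real) = real N \<Longrightarrow> 0 < N \<Longrightarrow> 0 < E" by simp

lemma E_pos:
  fixes r s :: nat
  assumes "r \<ge> 2" and "s \<ge> 2"
    and "s = 2 \<Longrightarrow> r \<ge> 3"
    and "s \<ge> 5 \<Longrightarrow> r \<ge> s - 1"
  shows "0 < (real s - 1) * real r ^ 3 - (real s ^ 2 - real s + 1) * real r ^ 2
     + (real s - 1) * (2 * real s - 1) * real r - real s * (real s - 1)"
proof -
  consider "s = 2" | "s = 3" | "s = 4" | "s \<ge> 5" using assms by linarith
  then show ?thesis
  proof cases
    case 1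
    define k where "k = r - 3"
    have k: "r = k + 3" using assms(3) 1 by (simp add: k_def)
    have "(real s - 1) * real r ^ 3 - (real s ^ 2 - real s + 1) * real r ^ 2
     + (real s - 1) * (2 * real s - 1) * real r - real s * (real s - 1)
      = real (7 + 12 * k + 6 * k^2 + k^3)"
    proof -
      have rr: "real r = real k + 3" "real s = 2" using k 1 by simp_all
      have "(real s - 1) * real r ^ 3 - (real s ^ 2 - real s + 1) * real r ^ 2
     + (real s - 1) * (2 * real s - 1) * real r - real s * (real s - 1)
       = 7 + 12 * real k + 6 * real k^2 + real k^3" unfolding rr by algebra
      then show ?thesis by (simp only: of_nat_add of_nat_mult of_nat_power of_nat_numeral)
    qed
    then show ?thesis by (rule pos_of_nat_eq) simp
  next
    case 2
    define k where "k = r - 2"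
    have k: "r = k + 2" using assms(1) by (simp add: k_def)
    have "(real s - 1) * real r ^ 3 - (real s ^ 2 - real s + 1) * real r ^ 2
     + (real s - 1) * (2 * real s - 1) * real r - real s * (real s - 1)
      = real (2 + 6 * k + 5 * k^2 + 2 * k^3)"
    proof -
      have rr: "real r = real k + 2" "real s = 3" using k 2 by simp_all
      have "(real s - 1) * real r ^ 3 - (real s ^ 2 - real s + 1) * real r ^ 2
     + (real s - 1) * (2 * real s - 1) * real r - real s * (real s - 1)
       = 2 + 6 * real k + 5 * real k^2 + 2 * real k^3" unfolding rr by algebra
      then show ?thesis by (simp only: of_nat_add of_nat_mult of_nat_power of_nat_numeral)
    qed
    then show ?thesis by (rule pos_of_nat_eq) simp
  next
    case 3
    define k where "k = r - 2"
    have k: "r = k + 2" using assms(1) by (simp add: k_def)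
    have "(real s - 1) * real r ^ 3 - (real s ^ 2 - real s + 1) * real r ^ 2
     + (real s - 1) * (2 * real s - 1) * real r - real s * (real s - 1)
      = real (2 + 5 * k + 5 * k^2 + 3 * k^3)"
    proof -
      have rr: "real r = real k + 2" "real s = 4" using k 3 by simp_all
      have "(real s - 1) * real r ^ 3 - (real s ^ 2 - real s + 1) * real r ^ 2
     + (real s - 1) * (2 * real s - 1) * real r - real s * (real s - 1)
       = 2 + 5 * real k + 5 * real k^2 + 3 * real k^3" unfolding rr by algebra
      then show ?thesis by (simp only: of_nat_add of_nat_mult of_nat_power of_nat_numeral)
    qed
    then show ?thesis by (rule pos_of_nat_eq) simp
  next
    case 4
    define j where "j = s - 5"
    have j: "s = j + 5" using 4 by (simp add: j_def)
    have "r \<ge> j + 4" using assms(4) 4 j by simp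
    define k where "k = r - (j + 4)"
    have k: "r = k + j + 4" using \<open>r \<ge> j + 4\<close> by (simp add: k_def)
    have "(real s - 1) * real r ^ 3 - (real s ^ 2 - real s + 1) * real r ^ 2
     + (real s - 1) * (2 * real s - 1) * real r - real s * (real s - 1)
      = real (44 + 39*j + 11*j^2 + j^3 + 60*k + 47*k*j + 12*k*j^2 + k*j^3
              + 27*k^2 + 15*k^2*j + 2*k^2*j^2 + 4*k^3 + k^3*j)"
    proof -
      have rr: "real r = real k + real j + 4" "real s = real j + 5" using k j by simp_all
      have "(real s - 1) * real r ^ 3 - (real s ^ 2 - real s + 1) * real r ^ 2
     + (real s - 1) * (2 * real s - 1) * real r - real s * (real s - 1)
       = 44 + 39*real j + 11*real j^2 + real j^3 + 60*real k + 47*real k*real j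
         + 12*real k*real j^2 + real k*real j^3
              + 27*real k^2 + 15*real k^2*real j + 2*real k^2*real j^2 + 4*real k^3 + real k^3*real j"
        unfolding rr by algebra
      then show ?thesis by (simp only: of_nat_add of_nat_mult of_nat_power of_nat_numeral)
    qed
    then show ?thesis by (rule pos_of_nat_eq) simp
  qed
qed



lemma xlnx_bound:
  fixes y y0 dd DD :: real
  assumes "y0 > 0" "0 < dd" "dd < 1" "y = y0 + DD" "\<bar>DD\<bar> \<le> dd * y0"
  shows "y * ln y - y0 * ln y0 - (ln y0 + 1) * DD \<le> DD^2 / (2 * ((1 - dd) * y0))"
    and "DD^2 / (2 * ((1 + dd) * y0)) \<le> y * ln y - y0 * ln y0 - (ln y0 + 1) * DD"
proof -
  have p1: "(1 - dd) * y0 > 0" using assms by (intro mult_pos_pos) auto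
  have e1: "(1 - dd) * y0 = y0 - dd * y0" by (simp add: algebra_simps)
  have e2: "(1 + dd) * y0 = y0 + dd * y0" by (simp add: algebra_simps)
  have ab: "- DD \<le> dd * y0" "DD \<le> dd * y0" using assms(5) by linarith+
  have p2: "y0 - dd * y0 > 0" using p1 e1 by simp
  have yp: "y > 0" using assms(4) ab p2 by linarith
  obtain t where t: "min y y0 \<le> t" "t \<le> max y y0" "t > 0"
    "y * ln y = y0 * ln y0 + (ln y0 + 1) * (y - y0) + (y - y0)^2 / (2 * t)"
    using xlnx_taylor[OF assms(1) yp] by blast
  have G: "y * ln y - y0 * ln y0 - (ln y0 + 1) * DD = DD^2 / (2 * t)"
    using t(4) assms(4) by simp
  have t1': "y0 - dd * y0 \<le> t" using t(1) assms(4) ab by (simp add: min_def split: if_splits; linarith)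
  have t2': "t \<le> y0 + dd * y0" using t(2) assms(4) ab by (simp add: max_def split: if_splits; linarith)
  have t1: "(1 - dd) * y0 \<le> t" using t1' e1 by simp
  have t2: "t \<le> (1 + dd) * y0" using t2' e2 by simp
  have "DD^2 / (2 * t) \<le> DD^2 / (2 * ((1 - dd) * y0))"
    by (rule divide_left_mono) (use t1 p1 t(3) in auto)
  then show "y * ln y - y0 * ln y0 - (ln y0 + 1) * DD \<le> DD^2 / (2 * ((1 - dd) * y0))" using G by simp
  have "DD^2 / (2 * ((1 + dd) * y0)) \<le> DD^2 / (2 * t)"
    by (rule divide_left_mono) (use t2 t(3) assms in auto)
  then show "DD^2 / (2 * ((1 + dd) * y0)) \<le> y * ln y - y0 * ln y0 - (ln y0 + 1) * DD" using G by simp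
qed

lemma quad_pos:
  fixes a b c x y :: real
  assumes "a > 0" "a * c - b^2 > 0"
  shows "a * x^2 + 2 * b * x * y + c * y^2 \<ge> 0"
    and "(x, y) \<noteq> (0, 0) \<Longrightarrow> a * x^2 + 2 * b * x * y + c * y^2 > 0"
proof -
  have id: "a * (a * x^2 + 2 * b * x * y + c * y^2) = (a * x + b * y)^2 + (a * c - b^2) * y^2"
    by (simp add: algebra_simps power2_eq_square)
  have "a * (a * x^2 + 2 * b * x * y + c * y^2) \<ge> 0" unfolding id using assms by simp
  then show "a * x^2 + 2 * b * x * y + c * y^2 \<ge> 0" using assms(1) by (simp add: zero_le_mult_iff)
  assume ne: "(x, y) \<noteq> (0, 0)"
  show "a * x^2 + 2 * b * x * y + c * y^2 > 0"
  proof (cases "y = 0")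
    case True
    then have "x \<noteq> 0" using ne by simp
    then show ?thesis using True assms(1) by simp
  next
    case False
    then have "(a * c - b^2) * y^2 > 0" using assms by simp
    then have "a * (a * x^2 + 2 * b * x * y + c * y^2) > 0" unfolding id
      by (smt (verit) zero_le_power2)
    then show ?thesis using assms(1) by (simp add: zero_less_mult_iff)
  qed
qed



lemma decomp:
  fixes L S x y a b a0 b0 la lb lc ld le lf F1 F2 F3 F4 F5 F6 E1 E2 E3 E4 E5 E6 G1 G2 G3 G4 G5 G6 k1 k2 :: real
  assumes "k1 * (S - 1) = 1" "S * k2 = k1"
    "L + la - lb = 0" "le + lf = 2 * lc" "ld = lf" "a = a0 + x" "b = b0 + y"
    "F1 = E1 + (la + 1) * (x + y) + G1"
    "F2 = E2 + (lb + 1) * (- (x + y)) + G2"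
    "F3 = E3 + (lc + 1) * y + G3"
    "F4 = E4 + (ld + 1) * x + G4"
    "F5 = E5 + (le + 1) * (- (S * y)) + G5"
    "F6 = E6 + (lf + 1) * (- ((S - 1) * x) - y) + G6"
  shows "(a + b) * L + F1 + F2 - 2 * k1 * F3 - F4 - k2 * F5 - k1 * F6
     - ((a0 + b0) * L + E1 + E2 - 2 * k1 * E3 - E4 - k2 * E5 - k1 * E6)
     = G1 + G2 - 2 * k1 * G3 - G4 - k2 * G5 - k1 * G6"
  using assms by algebra

lemma det_alg:
  fixes R S B P w :: real
  assumes "P * (R - 1)^2 = R^2" "w * B = 1" "B = R * S - R - S"
  shows "((S * (R * (S - 1)) - P) * (2 * R * w + S * R * w^2 + R - P) - (R * (S - 1) - P)^2) * (B^2 * (R - 1)^2)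
    = R ^ 3 * (S - 1)^2 * ((S - 1) * R ^ 3 - (S^2 - S + 1) * R^2 + (S - 1) * (2 * S - 1) * R - S * (S - 1))"
  using assms by algebra

theorem lemmaA3:
  fixes r s :: nat
  assumes "r \<ge> 2" and "s \<ge> 2"
    and "s = 2 \<Longrightarrow> r \<ge> 3"
    and "s \<in> {3, 4} \<Longrightarrow> r \<ge> 2"
    and "s \<ge> 5 \<Longrightarrow> r \<ge> s - 1"
  defines "\<alpha>0 \<equiv> 1 / (real r * (real s - 1))"
    and "\<beta>0 \<equiv> (real r * real s - real r - real s) / (real r * (real s - 1))"
  shows "local_max_on (\<lambda>(a, b). phi r s a b) (K s) (\<alpha>0, \<beta>0)
         \<and> hessian_neg_def r s \<alpha>0 \<beta>0"
proof -
  define R where "R = real r"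
  define S where "S = real s"
  have R2: "R \<ge> 2" using assms(1) unfolding R_def by simp
  have S2: "S \<ge> 2" using assms(2) unfolding S_def by simp
  define B where "B = R * S - R - S"
  define m where "m = R * (S - 1)"
  have Bpos: "B > 0"
  proof (cases "s = 2")
    case True
    then have "R \<ge> 3" using assms(3) unfolding R_def by simp
    then show ?thesis using True unfolding B_def S_def by simp
  next
    case False
    then have S3: "S \<ge> 3" using assms(2) unfolding S_def by simp
    have "R * (S - 1) \<ge> 2 * (S - 1)" using R2 S3 by (intro mult_right_mono) auto
    then show ?thesis using S3 unfolding B_def by (simp add: algebra_simps)
  qed
  have mpos: "m > 0" using R2 S2 unfolding m_def by simp
  have a0: "\<alpha>0 = 1 / m" unfolding \<alpha>0_def m_def R_def S_def ..
  have b0: "\<beta>0 = B / m" unfolding \<beta>0_def m_def B_def R_def S_def ..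
  have S1: "S - 1 \<noteq> 0" "S \<noteq> 0" using S2 by auto
  have R1: "R - 1 \<noteq> 0" "R \<noteq> 0" using R2 by auto
  have RR: "1 + R * R - R * 2 \<noteq> 0"
  proof
    assume "1 + R * R - R * 2 = 0"
    then have "(R - 1) * (R - 1) = 0" by (simp add: algebra_simps)
    then show False using R1 by simp
  qed
  have SS: "1 + S * S - S * 2 \<noteq> 0"
  proof
    assume "1 + S * S - S * 2 = 0"
    then have "(S - 1) * (S - 1) = 0" by (simp add: algebra_simps)
    then show False using S1 by simp
  qed
  have v1: "\<alpha>0 + \<beta>0 = (R - 1) / R"
    unfolding a0 b0 using S1 R1 mpos by (simp add: field_simps B_def m_def; algebra)
  have v2: "R - 1 - \<alpha>0 - \<beta>0 = (R - 1)^2 / R"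
  proof -
    have "R - 1 - \<alpha>0 - \<beta>0 = R - 1 - (\<alpha>0 + \<beta>0)" by simp
    also have "\<dots> = (R - 1)^2 / R" unfolding v1 using R1 by (simp add: field_simps power2_eq_square)
    finally show ?thesis .
  qed
  have mSB: "m - S = B" unfolding m_def B_def by (simp add: algebra_simps)
  have v5: "R * S - R - S - S * \<beta>0 = B^2 / m"
  proof -
    have "R * S - R - S - S * \<beta>0 = B - S * (B / m)" unfolding b0 B_def ..
    also have "\<dots> = B * (m - S) / m" using mpos by (simp add: field_simps)
    also have "\<dots> = B^2 / m" unfolding mSB by (simp add: power2_eq_square)
    finally show ?thesis .
  qed
  have v6: "1 - (S - 1) * \<alpha>0 - \<beta>0 = 1 / m"
  proof -
    have "1 - (S - 1) * \<alpha>0 - \<beta>0 = (m - (S - 1) - B) / m" unfolding a0 b0 using mpos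
      by (simp add: field_simps)
    also have "m - (S - 1) - B = 1" using mSB by simp
    finally show ?thesis .
  qed
  have posp: "pos r s \<alpha>0 \<beta>0"
    unfolding pos_def R_def[symmetric] S_def[symmetric] v2 v5 v6
    using mpos Bpos R2 by (simp add: a0 b0)
  define P where "P = 1 / ((R - 1) / R) + 1 / ((R - 1)^2 / R)"
  define T where "T = 2 * R / B + S * R / B^2 + R"
  have Pv: "P = R^2 / (R - 1)^2"
  proof -
    have "P = R / (R - 1) + R / (R - 1)^2" unfolding P_def by simp
    also have "R / (R - 1) = R * (R - 1) / (R - 1)^2" using R1 by (simp add: power2_eq_square)
    also have "R * (R - 1) / (R - 1)^2 + R / (R - 1)^2 = (R * (R - 1) + R) / (R - 1)^2"
      by (simp add: add_divide_distrib)
    also have "R * (R - 1) + R = R^2" by (simp add: algebra_simps power2_eq_square)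
    finally show ?thesis .
  qed
  have Pq_val: "Pq r \<alpha>0 \<beta>0 = P" unfolding Pq_def R_def[symmetric] P_def v1
    using v2 by simp
  have Daa_val: "Daa r s \<alpha>0 \<beta>0 = P - S * m"
    unfolding Daa_def Pq_val S_def[symmetric] v6 using mpos by (simp add: a0 algebra_simps)
  have Dab_val: "Dab r s \<alpha>0 \<beta>0 = P - m"
    unfolding Dab_def Pq_val S_def[symmetric] v6 using mpos by simp
  have Dbb_val: "Dbb r s \<alpha>0 \<beta>0 = P - T"
  proof -
    have t1: "2 / ((S - 1) * \<beta>0) = 2 * R / B" unfolding b0 m_def using S1 Bpos R1 by (simp add: field_simps)
    have t2: "S / ((S - 1) * (B^2 / m)) = S * R / B^2" unfolding m_def using S1 Bpos R1 by (simp add: field_simps)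
    have t3: "1 / ((S - 1) * (1 / m)) = R" unfolding m_def using S1 R1 by (simp add: field_simps)
    show ?thesis
      unfolding Dbb_def Pq_val S_def[symmetric] R_def[symmetric] v5 v6 T_def t1 t2 t3 by simp
  qed
  have hR: "S * (S - 1) * (R - 1)^2 > R"
  proof (cases "s = 2")
    case True
    then have R3: "R \<ge> 3" using assms(3) unfolding R_def by simp
    have "(R - 1)^2 \<ge> 2 * (R - 1)" unfolding power2_eq_square using R3 by (intro mult_right_mono) auto
    then show ?thesis using True R3 unfolding S_def by simp
  next
    case False
    then have S3: "S \<ge> 3" using assms(2) unfolding S_def by simp
    have "S * (S - 1) \<ge> 3 * 2" using S3 by (intro mult_mono) auto
    moreover have "(R - 1)^2 \<ge> 1 * (R - 1)" unfolding power2_eq_square using R2 by (intro mult_right_mono) auto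
    ultimately have "S * (S - 1) * (R - 1)^2 \<ge> 6 * (R - 1)" using R2
      by (metis mult_mono mult_1 zero_le_numeral mult_nonneg_nonneg diff_ge_0_iff_ge one_le_numeral order.trans
          mult.commute numeral_times_numeral semiring_norm(12) semiring_norm(14) semiring_norm(5) semiring_norm(2))
    then show ?thesis using R2 by simp
  qed
  have al1: "S * m - P > 0"
  proof -
    have "S * m * (R - 1)^2 = R * (S * (S - 1) * (R - 1)^2)" unfolding m_def by (simp add: algebra_simps)
    also have "\<dots> > R * R" using hR R2 by simp
    finally have "R^2 < S * m * (R - 1)^2" by (simp add: power2_eq_square)
    then have "P < S * m" unfolding Pv using R1 by (simp add: pos_divide_less_eq)
    then show ?thesis by simp
  qed
  define E where "E = (S - 1) * R ^ 3 - (S ^ 2 - S + 1) * R ^ 2 + (S - 1) * (2 * S - 1) * R - S * (S - 1)"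
  have Epos: "E > 0" unfolding E_def R_def S_def using E_pos[OF assms(1,2,3,5)] .
  have det1: "(S * m - P) * (T - P) - (m - P)^2 > 0"
  proof -
    define w where "w = 1 / B"
    have Tw: "T = 2 * R * w + S * R * w^2 + R" unfolding T_def w_def by (simp add: power_one_over)
    have hP: "P * (R - 1)^2 = R^2" unfolding Pv using R1 by simp
    have hw: "w * B = 1" unfolding w_def using Bpos by simp
    have "((S * m - P) * (T - P) - (m - P)^2) * (B^2 * (R - 1)^2) = R^3 * (S - 1)^2 * E"
      unfolding Tw m_def E_def by (rule det_alg[OF hP hw B_def])
    moreover have "R^3 * (S - 1)^2 * E > 0" using Epos R2 S2 by simp
    moreover have "B^2 * (R - 1)^2 > 0" using Bpos R1 by simp
    ultimately show ?thesis by (metis zero_less_mult_iff not_less_iff_gr_or_eq)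
  qed
  have hess: "hessian_neg_def r s \<alpha>0 \<beta>0"
    unfolding hessian_neg_def_def phi_aa_eq[OF assms(2) posp] phi_ab_eq[OF assms(2) posp]
      phi_ba_eq[OF assms(2) posp] phi_bb_eq[OF assms(2) posp] Daa_val Dab_val Dbb_val
  proof (intro allI impI)
    fix u v :: real assume "(u, v) \<noteq> (0, 0)"
    then have "(S * m - P) * u^2 + 2 * (m - P) * u * v + (T - P) * v^2 > 0"
      using quad_pos(2)[OF al1 det1] by blast
    then show "u * u * (P - S * m) + u * v * (P - m) + v * u * (P - m) + v * v * (P - T) < 0"
      by (simp add: algebra_simps power2_eq_square)
  qed
  have ev1: "eventually (\<lambda>k. S * m - k * P > 0) (at_right 1)"
  proof -
    have "((\<lambda>k. S * m - k * P) \<longlongrightarrow> S * m - 1 * P) (at_right 1)" by (intro tendsto_intros)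
    then show ?thesis by (rule order_tendstoD(1)) (use al1 in simp)
  qed
  have ev2: "eventually (\<lambda>k. (S * m - k * P) * (T - k * P) - (m - k * P)^2 > 0) (at_right 1)"
  proof -
    have "((\<lambda>k. (S * m - k * P) * (T - k * P) - (m - k * P)^2) \<longlongrightarrow>
       (S * m - 1 * P) * (T - 1 * P) - (m - 1 * P)^2) (at_right 1)" by (intro tendsto_intros)
    then show ?thesis by (rule order_tendstoD(1)) (use det1 in simp)
  qed
  obtain bnd where bnd: "bnd > 1" "\<And>k. k > 1 \<Longrightarrow> k < bnd \<Longrightarrow>
      S * m - k * P > 0 \<and> (S * m - k * P) * (T - k * P) - (m - k * P)^2 > 0"
    using eventually_conj[OF ev1 ev2] unfolding eventually_at_right_field by blast
  define \<kappa> where "\<kappa> = (1 + bnd) / 2"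
  have k1: "\<kappa> > 1" "\<kappa> < bnd" using bnd(1) unfolding \<kappa>_def by simp_all
  have kq: "S * m - \<kappa> * P > 0" "(S * m - \<kappa> * P) * (T - \<kappa> * P) - (m - \<kappa> * P)^2 > 0"
    using bnd(2)[OF k1] by auto
  have keyQ: "\<kappa> * P * (x + y)^2 \<le> S * m * x^2 + 2 * m * x * y + T * y^2" for x y
  proof -
    have "(S * m - \<kappa> * P) * x^2 + 2 * (m - \<kappa> * P) * x * y + (T - \<kappa> * P) * y^2 \<ge> 0"
      by (rule quad_pos(1)[OF kq])
    then show ?thesis by (simp add: algebra_simps power2_eq_square)
  qed
  define \<delta> where "\<delta> = (\<kappa> - 1) / (\<kappa> + 1)"
  have dpos: "\<delta> > 0" "\<delta> < 1" using k1 unfolding \<delta>_def by (simp_all add: field_simps)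
  define \<mu> where "\<mu> = min (min \<alpha>0 \<beta>0) (min (min ((R - 1) / R) ((R - 1)^2 / R)) (B^2 / m))"
  have mupos: "\<mu> > 0" unfolding \<mu>_def a0 b0 using mpos Bpos R2 by simp
  define e where "e = \<delta> * \<mu> / S"
  have epos: "e > 0" unfolding e_def using dpos mupos S2 by simp
  have eS: "S * e = \<delta> * \<mu>" unfolding e_def using S1 by simp
  have Kp: "(\<alpha>0, \<beta>0) \<in> K s"
  proof -
    have "(S - 1) * \<alpha>0 + \<beta>0 = 1 - 1 / m" using v6 by linarith
    moreover have "1 / m > 0" using mpos by simp
    moreover have "\<alpha>0 \<ge> 0" "\<beta>0 \<ge> 0" using mpos Bpos unfolding a0 b0 by simp_all
    ultimately show ?thesis unfolding K_def S_def[symmetric] by simp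
  qed
  define L where "L = ln (R - 1)"
  define k1 where "k1 = 1 / (S - 1)"
  define k2 where "k2 = 1 / (S * (S - 1))"
  have k1p: "k1 \<ge> 0" "k2 \<ge> 0" unfolding k1_def k2_def using S2 by simp_all
  have phi_form: "phi r s a b = (a + b) * L + (a + b) * ln (a + b) + (R - 1 - a - b) * ln (R - 1 - a - b)
      - 2 * k1 * (b * ln b) - a * ln a - k2 * ((R * S - R - S - S * b) * ln (R * S - R - S - S * b))
      - k1 * ((1 - (S - 1) * a - b) * ln (1 - (S - 1) * a - b))" for a b
    unfolding phi_def g_eq R_def[symmetric] S_def[symmetric] L_def k1_def k2_def by simp
  have lnA: "L + ln (\<alpha>0 + \<beta>0) - ln (R - 1 - \<alpha>0 - \<beta>0) = 0"
  proof -
    have "R - 1 - \<alpha>0 - \<beta>0 = (R - 1) * (\<alpha>0 + \<beta>0)" unfolding v1 v2 using R1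
      by (simp add: power2_eq_square)
    moreover have "ln ((R - 1) * (\<alpha>0 + \<beta>0)) = L + ln (\<alpha>0 + \<beta>0)"
      unfolding L_def v1 using R2 by (intro ln_mult_pos) simp_all
    ultimately show ?thesis by simp
  qed
  have lnB: "ln (R * S - R - S - S * \<beta>0) + ln (1 - (S - 1) * \<alpha>0 - \<beta>0) = 2 * ln \<beta>0"
  proof -
    have "(R * S - R - S - S * \<beta>0) * (1 - (S - 1) * \<alpha>0 - \<beta>0) = \<beta>0 * \<beta>0"
      unfolding v5 v6 using mpos by (simp add: b0 power2_eq_square)
    then have "ln ((R * S - R - S - S * \<beta>0) * (1 - (S - 1) * \<alpha>0 - \<beta>0)) = ln (\<beta>0 * \<beta>0)" by simp
    moreover have "ln ((R * S - R - S - S * \<beta>0) * (1 - (S - 1) * \<alpha>0 - \<beta>0)) =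
       ln (R * S - R - S - S * \<beta>0) + ln (1 - (S - 1) * \<alpha>0 - \<beta>0)"
      unfolding v5 v6 using mpos Bpos by (intro ln_mult_pos) auto
    moreover have "ln (\<beta>0 * \<beta>0) = 2 * ln \<beta>0"
    proof -
      have "\<beta>0 > 0" using mpos Bpos unfolding b0 by simp
      then show ?thesis by (simp add: ln_mult_pos)
    qed
    ultimately show ?thesis by simp
  qed
  have lnC: "ln \<alpha>0 = ln (1 - (S - 1) * \<alpha>0 - \<beta>0)" by (subst v6) (simp add: a0)
  have lm: "\<exists>e>0. \<forall>q\<in>K s. dist q (\<alpha>0, \<beta>0) < e \<longrightarrow>
      (\<lambda>(a, b). phi r s a b) q \<le> (\<lambda>(a, b). phi r s a b) (\<alpha>0, \<beta>0)"
  proof (intro exI[of _ e] conjI ballI impI epos)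
    fix q assume "q \<in> K s" and dq: "dist q (\<alpha>0, \<beta>0) < e"
    obtain a b where q: "q = (a, b)" by (cases q)
    define x where "x = a - \<alpha>0"
    define y where "y = b - \<beta>0"
    have ax: "a = \<alpha>0 + x" "b = \<beta>0 + y" unfolding x_def y_def by simp_all
    have xe: "\<bar>x\<bar> < e" using dist_fst_le[of q "(\<alpha>0, \<beta>0)"] dq unfolding q x_def
      by (simp add: dist_real_def)
    have ye: "\<bar>y\<bar> < e" using dist_snd_le[of q "(\<alpha>0, \<beta>0)"] dq unfolding q y_def
      by (simp add: dist_real_def)
    have y01: "\<alpha>0 + \<beta>0 > 0" "R - 1 - \<alpha>0 - \<beta>0 > 0" "\<beta>0 > 0" "\<alpha>0 > 0"
      "R * S - R - S - S * \<beta>0 > 0" "1 - (S - 1) * \<alpha>0 - \<beta>0 > 0"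
      using posp unfolding pos_def R_def[symmetric] S_def[symmetric] by auto
    have muv: "\<mu> \<le> \<alpha>0 + \<beta>0" "\<mu> \<le> R - 1 - \<alpha>0 - \<beta>0" "\<mu> \<le> \<beta>0" "\<mu> \<le> \<alpha>0"
      "\<mu> \<le> R * S - R - S - S * \<beta>0" "\<mu> \<le> 1 - (S - 1) * \<alpha>0 - \<beta>0"
      unfolding v1 v2 v5 v6 \<mu>_def by (auto simp: a0)
    have dmu: "\<delta> * \<mu> \<le> \<delta> * z" if "\<mu> \<le> z" for z
      using that dpos by (intro mult_left_mono) auto
    have e2: "2 * e \<le> S * e" using S2 epos by (intro mult_right_mono) auto
    have e1: "e \<le> S * e" using e2 epos by linarith
    have B1: "\<bar>x + y\<bar> \<le> \<delta> * (\<alpha>0 + \<beta>0)" using xe ye e2 eS dmu[OF muv(1)] by linarith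
    have B2: "\<bar>- (x + y)\<bar> \<le> \<delta> * (R - 1 - \<alpha>0 - \<beta>0)" using xe ye e2 eS dmu[OF muv(2)] by linarith
    have B3: "\<bar>y\<bar> \<le> \<delta> * \<beta>0" using ye e1 eS dmu[OF muv(3)] by linarith
    have B4: "\<bar>x\<bar> \<le> \<delta> * \<alpha>0" using xe e1 eS dmu[OF muv(4)] by linarith
    have B5: "\<bar>- (S * y)\<bar> \<le> \<delta> * (R * S - R - S - S * \<beta>0)"
    proof -
      have "\<bar>- (S * y)\<bar> = S * \<bar>y\<bar>" using S2 by (simp add: abs_mult)
      also have "\<dots> \<le> S * e" using ye S2 by (intro mult_left_mono) auto
      finally show ?thesis using eS dmu[OF muv(5)] by linarith
    qed
    have B6: "\<bar>- ((S - 1) * x) - y\<bar> \<le> \<delta> * (1 - (S - 1) * \<alpha>0 - \<beta>0)"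
    proof -
      have "\<bar>- ((S - 1) * x) - y\<bar> \<le> (S - 1) * \<bar>x\<bar> + \<bar>y\<bar>" 
      proof -
        have h: "\<bar>(S - 1) * x\<bar> = (S - 1) * \<bar>x\<bar>" using S2 by (simp add: abs_mult)
        show ?thesis using h by arith
      qed
      also have "(S - 1) * \<bar>x\<bar> \<le> (S - 1) * e" using xe S2 by (intro mult_left_mono) auto
      finally have "\<bar>- ((S - 1) * x) - y\<bar> \<le> S * e" using ye by (simp add: algebra_simps)
      then show ?thesis using eS dmu[OF muv(6)] by linarith
    qed
    note XB = xlnx_bound[OF _ dpos(1) dpos(2)]
    have G1: "(a + b) * ln (a + b) - (\<alpha>0 + \<beta>0) * ln (\<alpha>0 + \<beta>0) - (ln (\<alpha>0 + \<beta>0) + 1) * (x + y)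
       \<le> (x + y)^2 / (2 * ((1 - \<delta>) * (\<alpha>0 + \<beta>0)))"
      by (rule XB(1)[OF y01(1) _ B1]) (simp add: ax)
    have G2: "(R - 1 - a - b) * ln (R - 1 - a - b) - (R - 1 - \<alpha>0 - \<beta>0) * ln (R - 1 - \<alpha>0 - \<beta>0)
       - (ln (R - 1 - \<alpha>0 - \<beta>0) + 1) * (- (x + y))
       \<le> (- (x + y))^2 / (2 * ((1 - \<delta>) * (R - 1 - \<alpha>0 - \<beta>0)))"
      by (rule XB(1)[OF y01(2) _ B2]) (simp add: ax)
    have G3: "y^2 / (2 * ((1 + \<delta>) * \<beta>0)) \<le> b * ln b - \<beta>0 * ln \<beta>0 - (ln \<beta>0 + 1) * y"
      by (rule XB(2)[OF y01(3) _ B3]) (simp add: ax)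
    have G4: "x^2 / (2 * ((1 + \<delta>) * \<alpha>0)) \<le> a * ln a - \<alpha>0 * ln \<alpha>0 - (ln \<alpha>0 + 1) * x"
      by (rule XB(2)[OF y01(4) _ B4]) (simp add: ax)
    have G5: "(- (S * y))^2 / (2 * ((1 + \<delta>) * (R * S - R - S - S * \<beta>0))) \<le>
       (R * S - R - S - S * b) * ln (R * S - R - S - S * b) - (R * S - R - S - S * \<beta>0) * ln (R * S - R - S - S * \<beta>0)
       - (ln (R * S - R - S - S * \<beta>0) + 1) * (- (S * y))"
      by (rule XB(2)[OF y01(5) _ B5]) (simp add: ax algebra_simps)
    have G6: "(- ((S - 1) * x) - y)^2 / (2 * ((1 + \<delta>) * (1 - (S - 1) * \<alpha>0 - \<beta>0))) \<le>
       (1 - (S - 1) * a - b) * ln (1 - (S - 1) * a - b) - (1 - (S - 1) * \<alpha>0 - \<beta>0) * ln (1 - (S - 1) * \<alpha>0 - \<beta>0)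
       - (ln (1 - (S - 1) * \<alpha>0 - \<beta>0) + 1) * (- ((S - 1) * x) - y)"
      by (rule XB(2)[OF y01(6) _ B6]) (simp add: ax algebra_simps)
    define U1 where "U1 = (x + y)^2 / (2 * ((1 - \<delta>) * (\<alpha>0 + \<beta>0)))"
    define U2 where "U2 = (- (x + y))^2 / (2 * ((1 - \<delta>) * (R - 1 - \<alpha>0 - \<beta>0)))"
    define Lo3 where "Lo3 = y^2 / (2 * ((1 + \<delta>) * \<beta>0))"
    define Lo4 where "Lo4 = x^2 / (2 * ((1 + \<delta>) * \<alpha>0))"
    define Lo5 where "Lo5 = (- (S * y))^2 / (2 * ((1 + \<delta>) * (R * S - R - S - S * \<beta>0)))"
    define Lo6 where "Lo6 = (- ((S - 1) * x) - y)^2 / (2 * ((1 + \<delta>) * (1 - (S - 1) * \<alpha>0 - \<beta>0)))"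
    have dec: "phi r s a b - phi r s \<alpha>0 \<beta>0 =
      ((a + b) * ln (a + b) - (\<alpha>0 + \<beta>0) * ln (\<alpha>0 + \<beta>0) - (ln (\<alpha>0 + \<beta>0) + 1) * (x + y))
      + ((R - 1 - a - b) * ln (R - 1 - a - b) - (R - 1 - \<alpha>0 - \<beta>0) * ln (R - 1 - \<alpha>0 - \<beta>0)
       - (ln (R - 1 - \<alpha>0 - \<beta>0) + 1) * (- (x + y)))
      - 2 * k1 * (b * ln b - \<beta>0 * ln \<beta>0 - (ln \<beta>0 + 1) * y)
      - (a * ln a - \<alpha>0 * ln \<alpha>0 - (ln \<alpha>0 + 1) * x)
      - k2 * ((R * S - R - S - S * b) * ln (R * S - R - S - S * b) - (R * S - R - S - S * \<beta>0) * ln (R * S - R - S - S * \<beta>0)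
       - (ln (R * S - R - S - S * \<beta>0) + 1) * (- (S * y)))
      - k1 * ((1 - (S - 1) * a - b) * ln (1 - (S - 1) * a - b) - (1 - (S - 1) * \<alpha>0 - \<beta>0) * ln (1 - (S - 1) * \<alpha>0 - \<beta>0)
       - (ln (1 - (S - 1) * \<alpha>0 - \<beta>0) + 1) * (- ((S - 1) * x) - y))"
      unfolding phi_form
      apply (rule decomp[where la = "ln (\<alpha>0 + \<beta>0)" and lb = "ln (R - 1 - \<alpha>0 - \<beta>0)"
          and lc = "ln \<beta>0" and ld = "ln \<alpha>0" and le = "ln (R * S - R - S - S * \<beta>0)"
          and lf = "ln (1 - (S - 1) * \<alpha>0 - \<beta>0)" and x = x and y = y and S = S])
      using S1 lnA lnB lnC ax by (simp_all add: k1_def k2_def)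
    have k1L: "2 * k1 * Lo3 \<le> 2 * k1 * (b * ln b - \<beta>0 * ln \<beta>0 - (ln \<beta>0 + 1) * y)"
      unfolding Lo3_def using G3 k1p by (intro mult_left_mono) auto
    have k2L: "k2 * Lo5 \<le> k2 * ((R * S - R - S - S * b) * ln (R * S - R - S - S * b) - (R * S - R - S - S * \<beta>0) * ln (R * S - R - S - S * \<beta>0)
       - (ln (R * S - R - S - S * \<beta>0) + 1) * (- (S * y)))"
      unfolding Lo5_def using G5 k1p by (intro mult_left_mono) auto
    have k3L: "k1 * Lo6 \<le> k1 * ((1 - (S - 1) * a - b) * ln (1 - (S - 1) * a - b) - (1 - (S - 1) * \<alpha>0 - \<beta>0) * ln (1 - (S - 1) * \<alpha>0 - \<beta>0)
       - (ln (1 - (S - 1) * \<alpha>0 - \<beta>0) + 1) * (- ((S - 1) * x) - y))"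
      unfolding Lo6_def using G6 k1p by (intro mult_left_mono) auto
    have diff1: "phi r s a b - phi r s \<alpha>0 \<beta>0 \<le> U1 + U2 - (2 * k1 * Lo3 + Lo4 + k2 * Lo5 + k1 * Lo6)"
      unfolding dec using G1 G2 G4 k1L k2L k3L unfolding U1_def U2_def Lo4_def by linarith
    have Uv: "U1 + U2 = P * ((x + y)^2 / (2 * (1 - \<delta>)))"
    proof -
      have h: "Z / (2 * ((1 - \<delta>) * A1)) + Z / (2 * ((1 - \<delta>) * A2)) = (1 / A1 + 1 / A2) * (Z / (2 * (1 - \<delta>)))"
        for Z A1 A2 :: real
      proof -
        have hh: "Z / (2 * ((1 - \<delta>) * A)) = Z / (2 * (1 - \<delta>)) * (1 / A)" for A :: real
          by (metis divide_divide_eq_left mult.assoc times_divide_eq_right mult.right_neutral)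
        show ?thesis unfolding hh by (simp only: distrib_right mult.commute)
      qed
      have "(- (x + y))^2 = (x + y)^2" by (rule power2_minus)
      then show ?thesis unfolding U1_def U2_def P_def
        using h[of "(x + y)^2" "\<alpha>0 + \<beta>0" "R - 1 - \<alpha>0 - \<beta>0"] unfolding v1 v2 by simp
    qed
    define Q2 where "Q2 = 1 / (2 * (1 + \<delta>))"
    have hd: "Z / (2 * ((1 + \<delta>) * A)) = (1 / A) * Z * Q2" for Z A :: real
      unfolding Q2_def by (metis divide_divide_eq_left mult.assoc times_divide_eq_right mult.right_neutral mult.commute)
    have c3: "2 * k1 * (1 / \<beta>0) = 2 * R / B"
      unfolding k1_def b0 m_def using R1 S1 Bpos by (simp add: field_simps)
    have c5: "k2 * (1 / (B^2 / m)) * S^2 = S * R / B^2"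
      unfolding k2_def m_def using R1 S1 Bpos by (simp add: field_simps power2_eq_square)
    have c6: "k1 * (1 / (1 / m)) = R"
      unfolding k1_def m_def using R1 S1 by (simp add: field_simps)
    have l3v: "2 * k1 * Lo3 = (2 * R / B) * y^2 * Q2"
      unfolding Lo3_def hd c3[symmetric] by (simp add: ac_simps)
    have l4v: "Lo4 = m * x^2 * Q2"
      unfolding Lo4_def hd a0 by simp
    have l5v: "k2 * Lo5 = (S * R / B^2) * y^2 * Q2"
      unfolding Lo5_def hd v5 c5[symmetric] by (simp add: ac_simps power_mult_distrib)
    have l6v: "k1 * Lo6 = R * ((S - 1) * x + y)^2 * Q2"
    proof -
      have "(- ((S - 1) * x) - y)^2 = ((S - 1) * x + y)^2" by (simp add: power2_eq_square algebra_simps)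
      then show ?thesis unfolding Lo6_def hd v6 c6[symmetric] by (simp add: ac_simps)
    qed
    have Nv: "2 * k1 * Lo3 + Lo4 + k2 * Lo5 + k1 * Lo6 = (S * m * x^2 + 2 * m * x * y + T * y^2) * Q2"
    proof -
      have e: "(2 * R / B) * y^2 + m * x^2 + (S * R / B^2) * y^2 + R * ((S - 1) * x + y)^2
         = S * m * x^2 + 2 * m * x * y + T * y^2"
        unfolding T_def m_def by (simp add: algebra_simps power2_eq_square)
      have "2 * k1 * Lo3 + Lo4 + k2 * Lo5 + k1 * Lo6 =
          ((2 * R / B) * y^2 + m * x^2 + (S * R / B^2) * y^2 + R * ((S - 1) * x + y)^2) * Q2"
        unfolding l3v l4v l5v l6v by (simp only: distrib_right)
      then show ?thesis unfolding e .
    qed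
    have Q2v: "Q2 = (\<kappa> + 1) / (4 * \<kappa>)"
      unfolding Q2_def \<delta>_def using k1 by (simp add: field_simps)
    have Q1v: "(x + y)^2 / (2 * (1 - \<delta>)) = (x + y)^2 * ((\<kappa> + 1) / 4)"
      unfolding \<delta>_def using k1 by (simp add: field_simps)
    have kd1: "P * ((x + y)^2 / (2 * (1 - \<delta>))) = (\<kappa> + 1) / (4 * \<kappa>) * (\<kappa> * P * (x + y)^2)"
      unfolding Q1v using k1 by (simp add: field_simps)
    have kd2: "(S * m * x^2 + 2 * m * x * y + T * y^2) * Q2 =
       (\<kappa> + 1) / (4 * \<kappa>) * (S * m * x^2 + 2 * m * x * y + T * y^2)"
      unfolding Q2v by simp
    have "(\<kappa> + 1) / (4 * \<kappa>) * (\<kappa> * P * (x + y)^2) \<le> (\<kappa> + 1) / (4 * \<kappa>) * (S * m * x^2 + 2 * m * x * y + T * y^2)"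
      using keyQ k1 by (intro mult_left_mono) auto
    then have "phi r s a b - phi r s \<alpha>0 \<beta>0 \<le> 0"
      using diff1 Uv Nv kd1 kd2 by linarith
    then show "(\<lambda>(a, b). phi r s a b) q \<le> (\<lambda>(a, b). phi r s a b) (\<alpha>0, \<beta>0)"
      unfolding q by simp
  qed
  show ?thesis using Kp lm hess unfolding local_max_on_def by blast
qed

end
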